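(* Let $G$ be a finite simple graph such that the cut polytope $\mathrm{Cut}(G)$ is compressed, and let $\Sigma$ be a special simplex in $\mathrm{Cut}(G)$. If $G$ satisfies one of the conditions (a) there exists an edge of $G$ that is contained in no triangle of $G$, or (b) $G$ has an induced cycle of length $4$, then $\dim\Sigma=1$.
   Context: $G$ is a finite graph without loops or multiple edges on vertex set $[n]$ with edge set $\{e_1,\dots,e_m\}$. For $S\subset[n]$, $\delta_G(S)\in\{0,1\}^m$ has coordinate $1$ at edge $\{a,b\}$ iff $|S\cap\{a,b\}|=1$; the cut polytope $\mathrm{Cut}(G)\subset\mathbb{R}^m$ is the convex hull of all $\delta_G(S)$. An integral polytope is compressed if all of its reverse lexicographic (pulling) triangulations, using its lattice points, are unimodular. A $d$-simplex $\Sigma$ each of whose vertices is a vertex of a polytope $P$ is a special simplex in $P$ if each facet of $P$ contains exactly $d$ of the vertices of $\Sigma$. An induced cycle is a cycle without chords; a triangle is a cycle of length $3$. *)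

theory Defs
  imports "HOL-Analysis.Analysis"
begin

text \<open>Coordinates of R^m are
indexed by the edges, i.e. R^m is real ^ 'e.\<close>

definition simple_graph :: "('e::finite \<Rightarrow> 'v::finite set) \<Rightarrow> bool" where
  "simple_graph ends \<longleftrightarrow> inj ends \<and> (\<forall>e. card (ends e) = 2)"

definition adj :: "('e \<Rightarrow> 'v set) \<Rightarrow> 'v \<Rightarrow> 'v \<Rightarrow> bool" where
  "adj ends u w \<longleftrightarrow> {u, w} \<in> range ends"

definition cut_vector :: "('e::finite \<Rightarrow> 'v set) \<Rightarrow> 'v set \<Rightarrow> real ^ 'e" where
  "cut_vector ends S = (\<chi> e. if card (S \<inter> ends e) = 1 then 1 else 0)"

definition cut_polytope :: "('e::finite \<Rightarrow> 'v set) \<Rightarrow> (real ^ 'e) set" where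
  "cut_polytope ends = convex hull (range (cut_vector ends))"

definition lattice_points :: "(real ^ 'n::finite) set \<Rightarrow> (real ^ 'n) set" where
  "lattice_points P = {x \<in> P. \<forall>i. x $ i \<in> \<int>}"

text \<open>Maximal simplices (given by vertex sets) of the pulling (reverse lexicographic)
triangulation of a polytope Q with respect to the order given by the rank function r:
pull the earliest vertex v and cone it over the pulling triangulations of the facets
of Q not containing v.\<close>
inductive pulling_simplex :: "('a::euclidean_space \<Rightarrow> nat) \<Rightarrow> 'a set \<Rightarrow> 'a set \<Rightarrow> bool"
  for r where
  point: "pulling_simplex r {v} {v}"
| cone: "\<lbrakk> v extreme_point_of Q; \<forall>w. w extreme_point_of Q \<longrightarrow> r v \<le> r w;
           F facet_of Q; v \<notin> F; pulling_simplex r F S \<rbrakk>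
         \<Longrightarrow> pulling_simplex r Q (insert v S)"

text \<open>A simplex with vertex set S is unimodular w.r.t. the lattice points A of the
polytope: its vertices are in A, affinely independent, and they generate the same
affine lattice as A (normalized volume 1 w.r.t. the lattice generated by A).\<close>
definition unimodular_wrt :: "'a::euclidean_space set \<Rightarrow> 'a set \<Rightarrow> bool" where
  "unimodular_wrt A S \<longleftrightarrow> S \<subseteq> A \<and> \<not> affine_dependent S \<and>
     (\<forall>a\<in>A. \<exists>c :: 'a \<Rightarrow> int. (\<Sum>s\<in>S. c s) = 1 \<and> a = (\<Sum>s\<in>S. of_int (c s) *\<^sub>R s))"

definition compressed :: "(real ^ 'n::finite) set \<Rightarrow> bool" where
  "compressed P \<longleftrightarrow>
     (\<forall>r :: real ^ 'n \<Rightarrow> nat. inj_on r (lattice_points P) \<longrightarrow>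
        (\<forall>S. pulling_simplex r P S \<longrightarrow> unimodular_wrt (lattice_points P) S))"

definition special_simplex :: "'a::euclidean_space set \<Rightarrow> int \<Rightarrow> 'a set \<Rightarrow> bool" where
  "special_simplex P d \<Sigma> \<longleftrightarrow> d simplex \<Sigma> \<and>
     {v. v extreme_point_of \<Sigma>} \<subseteq> {v. v extreme_point_of P} \<and>
     (\<forall>F. F facet_of P \<longrightarrow> int (card ({v. v extreme_point_of \<Sigma>} \<inter> F)) = d)"

definition edge_in_no_triangle :: "('e \<Rightarrow> 'v set) \<Rightarrow> bool" where
  "edge_in_no_triangle ends \<longleftrightarrow>
     (\<exists>a b. adj ends a b \<and> \<not> (\<exists>c. adj ends a c \<and> adj ends b c))"

definition has_induced_4cycle :: "('e \<Rightarrow> 'v set) \<Rightarrow> bool" where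
  "has_induced_4cycle ends \<longleftrightarrow>
     (\<exists>a b c d. distinct [a, b, c, d] \<and> adj ends a b \<and> adj ends b c \<and> adj ends c d \<and>
        adj ends d a \<and> \<not> adj ends a c \<and> \<not> adj ends b d)"

end

theory Submission
  imports Defs
begin


lemma ends_pq: assumes "simple_graph ends" obtains p q where "p \<noteq> q" "ends g = {p,q}"
  using assms unfolding simple_graph_def by (metis card_2_iff)

lemma cv_pq: assumes "ends g = {p,q}" "p \<noteq> q"
  shows "cut_vector ends S $ g = (if (p\<in>S) = (q\<in>S) then 0 else 1)"
proof -
  have "card (S \<inter> {p,q}) = (if p \<in> S then 1 else 0) + (if q \<in> S then 1 else 0)"
    using assms(2) by (cases "p\<in>S"; cases "q\<in>S") auto
  then show ?thesis using assms by (auto simp: cut_vector_def)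
qed

lemma cv_empty: "cut_vector ends {} = 0"
  by (simp add: cut_vector_def vec_eq_iff)

lemma axis_nth: "(axis f (1::real)) $ g = (if g = f then 1 else 0)"
  by (simp add: axis_def)

lemma card2_neq: assumes "simple_graph ends" "ends f = {u,w}" shows "u \<noteq> w"
proof
  assume "u = w"
  with assms(2) have "card (ends f) = 1" by simp
  moreover have "card (ends f) = 2" using assms(1) by (simp add: simple_graph_def)
  ultimately show False by simp
qed

lemma four_term:
  assumes sg: "simple_graph ends" and f: "ends f = {u,w}" and "u \<notin> T" "w \<notin> T"
  shows "cut_vector ends (insert u T) + cut_vector ends (insert w T)
        - cut_vector ends (insert u (insert w T)) - cut_vector ends T = 2 *\<^sub>R axis f 1"
proof -
  have uw: "u \<noteq> w" using card2_neq[OF sg f] .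
  show ?thesis
  proof (subst vec_eq_iff, intro allI)
    fix g
    obtain p q where pq: "p \<noteq> q" "ends g = {p,q}" using ends_pq[OF sg] by blast
    have geq: "(g = f) = ({p,q} = {u,w})" using sg pq f unfolding simple_graph_def inj_def by metis
    show "(cut_vector ends (insert u T) + cut_vector ends (insert w T)
        - cut_vector ends (insert u (insert w T)) - cut_vector ends T) $ g = (2 *\<^sub>R axis f 1) $ g"
      using assms uw pq geq by (auto simp: cv_pq[of ends g p q, OF pq(2,1)] axis_nth doubleton_eq_iff)
  qed
qed



lemma span_univ:
  fixes h :: "'a::euclidean_space"
  assumes "subspace S" "{x. h \<bullet> x = 0} \<subseteq> S" "v \<in> S" "h \<bullet> v \<noteq> 0"
  shows "S = UNIV"
proof -
  { fix x
    let ?t = "(h \<bullet> x) / (h \<bullet> v)"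
    have "h \<bullet> (x - ?t *\<^sub>R v) = 0" using assms(4) by (simp add: inner_diff_right)
    hence "x - ?t *\<^sub>R v \<in> S" using assms(2) by blast
    moreover have "?t *\<^sub>R v \<in> S" using assms(1,3) by (simp add: subspace_scale)
    ultimately have "x \<in> S" using assms(1) by (metis diff_add_cancel subspace_add) }
  thus ?thesis by blast
qed

lemma base_facet:
  fixes h :: "real^'e::finite" and ends :: "'e \<Rightarrow> 'v set"
  assumes h0: "h \<noteq> 0" and le: "\<And>S. h \<bullet> cut_vector ends S \<le> 0"
   and sp: "{x. h\<bullet>x = 0} \<subseteq> span {cut_vector ends S | S. h \<bullet> cut_vector ends S = 0}"
   and S0: "h \<bullet> cut_vector ends S0 < 0"
 shows "(cut_polytope ends \<inter> {x. h\<bullet>x = 0}) facet_of cut_polytope ends"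
proof -
  let ?P = "cut_polytope ends" let ?F = "?P \<inter> {x. h\<bullet>x = 0}" let ?H = "{x. h\<bullet>x = 0}"
  have cP: "convex ?P" by (simp add: cut_polytope_def convex_convex_hull)
  have Ple: "?P \<subseteq> {x. h \<bullet> x \<le> 0}" unfolding cut_polytope_def
    by (rule hull_minimal) (use le convex_halfspace_le in auto)
  have face: "?F face_of ?P" using face_of_Int_supporting_hyperplane_le[OF cP] Ple by blast
  have cvP: "cut_vector ends S \<in> ?P" for S unfolding cut_polytope_def by (rule hull_inc) auto
  have zF: "0 \<in> ?F" using cvP[of "{}"] by (simp add: cv_empty)
  have TF: "{cut_vector ends S | S. h \<bullet> cut_vector ends S = 0} \<subseteq> ?F" using cvP by auto
  have spanF: "span ?F = ?H"
  proof
    show "span ?F \<subseteq> ?H" by (rule span_minimal) (auto simp: subspace_hyperplane)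
    show "?H \<subseteq> span ?F" using sp span_mono[OF TF] by blast
  qed
  have "aff_dim ?F = aff_dim (affine hull ?F)" by simp
  also have "affine hull ?F = ?H" using affine_hull_span_0[of ?F] zF spanF hull_inc by metis
  finally have dF: "aff_dim ?F = DIM(real^'e) - 1" using h0 by simp
  have zP: "0 \<in> ?P" using zF by blast
  have "span ?P = UNIV"
  proof (rule span_univ[of _ h "cut_vector ends S0"])
    show "subspace (span ?P)" by simp
    show "?H \<subseteq> span ?P" using spanF span_mono[of ?F ?P] by blast
    show "cut_vector ends S0 \<in> span ?P" using cvP span_base by blast
    show "h \<bullet> cut_vector ends S0 \<noteq> 0" using S0 by simp
  qed
  hence "affine hull ?P = UNIV" using affine_hull_span_0[of ?P] zP hull_inc by metis
  hence dP: "aff_dim ?P = DIM(real^'e)" by (metis aff_dim_affine_hull aff_dim_UNIV)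
  show ?thesis unfolding facet_of_def using face zF dF dP by auto
qed



definition swD :: "('e::finite \<Rightarrow> 'v set) \<Rightarrow> 'v set \<Rightarrow> real^'e \<Rightarrow> real^'e" where
  "swD ends R x = (\<chi> g. (1 - 2 * cut_vector ends R $ g) * x $ g)"

definition sw :: "('e::finite \<Rightarrow> 'v set) \<Rightarrow> 'v set \<Rightarrow> real^'e \<Rightarrow> real^'e" where
  "sw ends R x = cut_vector ends R + swD ends R x"

lemma cv01: "cut_vector ends R $ g = 0 \<or> cut_vector ends R $ g = 1"
  by (simp add: cut_vector_def)

lemma swD_linear: "linear (swD ends R)"
  by (rule linearI) (auto simp: swD_def vec_eq_iff algebra_simps)

lemma swD_swD: "swD ends R (swD ends R x) = x"
proof -
  have "(1 - 2 * cut_vector ends R $ g) * ((1 - 2 * cut_vector ends R $ g) * x $ g) = x $ g" for g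
    using cv01[of ends R g] by auto
  thus ?thesis by (simp add: swD_def vec_eq_iff)
qed

lemma swD_inj: "inj (swD ends R)"
  by (metis injI swD_swD)

lemma sw_sw: "sw ends R (sw ends R x) = x"
proof -
  have "cut_vector ends R $ g + (1 - 2 * cut_vector ends R $ g) *
      (cut_vector ends R $ g + (1 - 2 * cut_vector ends R $ g) * x $ g) = x $ g" for g
    using cv01[of ends R g] by auto
  thus ?thesis by (simp add: sw_def swD_def vec_eq_iff)
qed

lemma sw_cv: assumes sg: "simple_graph ends"
  shows "sw ends R (cut_vector ends S) = cut_vector ends ((S - R) \<union> (R - S))"
proof (subst vec_eq_iff, intro allI)
  fix g
  obtain p q where pq: "p \<noteq> q" "ends g = {p,q}" using ends_pq[OF sg] by blast
  show "sw ends R (cut_vector ends S) $ g = cut_vector ends ((S - R) \<union> (R - S)) $ g"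
    using pq(1) by (cases "p\<in>S"; cases "q\<in>S"; cases "p\<in>R"; cases "q\<in>R")
      (simp_all add: sw_def swD_def cv_pq[of ends g p q, OF pq(2,1)])
qed

lemma sw_eq: "sw ends R ` A = (\<lambda>x. cut_vector ends R + x) ` (swD ends R ` A)"
  by (auto simp: sw_def image_iff)

lemma sw_image_P: assumes sg: "simple_graph ends"
  shows "sw ends R ` cut_polytope ends = cut_polytope ends"
proof -
  have "sw ends R ` cut_polytope ends = convex hull (sw ends R ` range (cut_vector ends))"
    unfolding cut_polytope_def sw_eq
    by (simp add: convex_hull_linear_image[OF swD_linear] convex_hull_translation)
  also have "sw ends R ` range (cut_vector ends) = range (cut_vector ends)"
  proof -
    have "cut_vector ends S = sw ends R (cut_vector ends ((S - R) \<union> (R - S)))" for S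
    proof -
      have "((S - R) \<union> (R - S) - R) \<union> (R - ((S - R) \<union> (R - S))) = S" by blast
      thus ?thesis by (simp add: sw_cv[OF sg])
    qed
    hence "cut_vector ends S \<in> sw ends R ` range (cut_vector ends)" for S
      by (metis rangeI image_eqI)
    moreover have "sw ends R ` range (cut_vector ends) \<subseteq> range (cut_vector ends)"
      by (auto simp: sw_cv[OF sg])
    ultimately show ?thesis by blast
  qed
  finally show ?thesis unfolding cut_polytope_def .
qed

lemma sw_facet: assumes sg: "simple_graph ends" and F: "F facet_of cut_polytope ends"
  shows "sw ends R ` F facet_of cut_polytope ends"
proof -
  let ?P = "cut_polytope ends" let ?c = "cut_vector ends R" let ?D = "swD ends R"
  have P: "?P = (\<lambda>x. ?c + x) ` (?D ` ?P)" using sw_image_P[OF sg, of R] unfolding sw_eq by simp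
  have "F face_of ?P" "F \<noteq> {}" "aff_dim F = aff_dim ?P - 1" using F by (auto simp: facet_of_def)
  have 1: "(\<lambda>x. ?c + x) ` (?D ` F) face_of (\<lambda>x. ?c + x) ` (?D ` ?P)"
    using \<open>F face_of ?P\<close> by (simp only: face_of_translation_eq face_of_linear_image[OF swD_linear swD_inj])
  have 2: "aff_dim ((\<lambda>x. ?c + x) ` (?D ` F)) = aff_dim F"
    by (simp only: aff_dim_translation_eq aff_dim_injective_linear_image[OF swD_linear swD_inj])
  have 3: "aff_dim ((\<lambda>x. ?c + x) ` (?D ` ?P)) = aff_dim ?P"
    by (simp only: aff_dim_translation_eq aff_dim_injective_linear_image[OF swD_linear swD_inj])
  show ?thesis unfolding facet_of_def sw_eq using 1 2 3 P[symmetric] \<open>F \<noteq> {}\<close> \<open>aff_dim F = aff_dim ?P - 1\<close>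
    by auto
qed

lemma sw_mem: "(x \<in> sw ends R ` F) = (sw ends R x \<in> F)"
proof
  assume "x \<in> sw ends R ` F" then obtain y where "y \<in> F" "x = sw ends R y" by blast
  thus "sw ends R x \<in> F" by (simp add: sw_sw)
next
  assume "sw ends R x \<in> F" thus "x \<in> sw ends R ` F" by (metis image_eqI sw_sw)
qed



lemma ends_eq: assumes "simple_graph ends" "ends f = ends g" shows "f = g"
  using assms unfolding simple_graph_def inj_def by metis

lemma three_term:
  assumes sg: "simple_graph ends" and e0: "ends e0 = {a,b}" and f: "ends f = {a,w}" and fe: "f \<noteq> e0"
    and nadj: "\<not> adj ends b w"
  shows "cut_vector ends {w} - cut_vector ends {a,b,w} + cut_vector ends {a,b} = 2 *\<^sub>R axis f 1"
proof -
  have ab: "a \<noteq> b" using card2_neq[OF sg e0] .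
  have aw: "a \<noteq> w" using card2_neq[OF sg f] .
  have bw: "b \<noteq> w" using fe ends_eq[OF sg] e0 f by metis
  show ?thesis
  proof (subst vec_eq_iff, intro allI)
    fix g
    obtain p q where pq: "p \<noteq> q" "ends g = {p,q}" using ends_pq[OF sg] by blast
    have geq: "(g = f) = ({p,q} = {a,w})" using ends_eq[OF sg, of g f] pq f by auto
    have nbw: "{p,q} \<noteq> {b,w}" using nadj pq unfolding adj_def by (metis rangeI)
    show "(cut_vector ends {w} - cut_vector ends {a,b,w} + cut_vector ends {a,b}) $ g = (2 *\<^sub>R axis f 1) $ g"
      using ab aw bw pq geq nbw by (auto simp: cv_pq[of ends g p q, OF pq(2,1)] axis_nth doubleton_eq_iff)
  qed
qed

lemma axis_span_a:
  assumes sg: "simple_graph ends" and e0: "ends e0 = {a,b}" and f: "ends f = {a,w}" and fe: "f \<noteq> e0"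
    and nadj: "\<not> adj ends b w"
  shows "axis f 1 \<in> span {cut_vector ends S | S. (a\<in>S) = (b\<in>S)}"
proof -
  let ?T = "{cut_vector ends S | S. (a\<in>S) = (b\<in>S)}"
  have ab: "a \<noteq> b" using card2_neq[OF sg e0] .
  have aw: "a \<noteq> w" using card2_neq[OF sg f] .
  have bw: "b \<noteq> w" using fe ends_eq[OF sg] e0 f by metis
  have 1: "cut_vector ends {w} \<in> span ?T" by (rule span_base) (use aw bw in auto)
  have 2: "cut_vector ends {a,b,w} \<in> span ?T" by (rule span_base) auto
  have 3: "cut_vector ends {a,b} \<in> span ?T" by (rule span_base) auto
  have "(1/2) *\<^sub>R (cut_vector ends {w} - cut_vector ends {a,b,w} + cut_vector ends {a,b}) \<in> span ?T"
    using 1 2 3 by (intro span_scale span_add span_diff)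
  thus ?thesis unfolding three_term[OF assms] by simp
qed

lemma axis_span_far:
  assumes sg: "simple_graph ends" and f: "ends f = {u,w}" and "P {u}" "P {w}" "P {u,w}" "P {}"
  shows "axis f 1 \<in> span {cut_vector ends S | S. P S}"
proof -
  let ?T = "{cut_vector ends S | S. P S}"
  have uw: "u \<noteq> w" using card2_neq[OF sg f] .
  have "(1/2) *\<^sub>R (cut_vector ends {u} + cut_vector ends {w} - cut_vector ends {u,w} - cut_vector ends {})
        \<in> span ?T"
    using assms by (intro span_scale span_add span_diff span_base) auto
  thus ?thesis using four_term[OF sg f, of "{}"] by simp
qed

lemma hyper_span:
  fixes x :: "real^'e::finite"
  assumes "\<And>g. g \<notin> E \<Longrightarrow> axis g 1 \<in> span T"
  shows "(\<Sum>g\<in>UNIV - E. x $ g *\<^sub>R axis g 1) \<in> span T"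
  using assms by (intro span_sum span_scale) auto

lemma expand_E:
  fixes x :: "real^'e::finite"
  shows "x = (\<Sum>g\<in>UNIV - E. x $ g *\<^sub>R axis g 1) + (\<Sum>g\<in>E. x $ g *\<^sub>R axis g 1)"
proof -
  have "x = (\<Sum>g\<in>UNIV. x $ g *\<^sub>R axis g 1)" using basis_expansion[of x] by (simp add: scalar_mult_eq_scaleR)
  also have "\<dots> = (\<Sum>g\<in>UNIV - E. x $ g *\<^sub>R axis g 1) + (\<Sum>g\<in>E. x $ g *\<^sub>R axis g 1)"
    by (metis (no_types, lifting) Int_UNIV_left finite sum.Int_Diff add.commute)
  finally show ?thesis .
qed

lemma span_a:
  fixes ends :: "'e::finite \<Rightarrow> 'v::finite set"
  assumes sg: "simple_graph ends" and e0: "ends e0 = {a,b}" and tri: "\<not> (\<exists>c. adj ends a c \<and> adj ends b c)"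
  shows "{x. x $ e0 = 0} \<subseteq> span {cut_vector ends S | S. (a\<in>S) = (b\<in>S)}"
proof
  let ?T = "{cut_vector ends S | S. (a\<in>S) = (b\<in>S)}"
  have ab: "a \<noteq> b" using card2_neq[OF sg e0] .
  have ax: "axis f 1 \<in> span ?T" if "f \<notin> {e0}" for f
  proof -
    obtain u w where uw: "u \<noteq> w" "ends f = {u,w}" using ends_pq[OF sg] by blast
    have fe: "f \<noteq> e0" using that by simp
    have adjf: "adj ends u w" "adj ends w u" using uw unfolding adj_def by (metis insert_commute rangeI)+
    have adjs: "adj ends x y = adj ends y x" for x y unfolding adj_def by (simp add: insert_commute)
    consider "u = a" | "w = a" | "u = b" | "w = b" | "u \<notin> {a,b}" "w \<notin> {a,b}" by blast
    then show ?thesis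
    proof cases
      case 1 thus ?thesis using axis_span_a[OF sg e0 _ fe] uw adjf tri by blast
    next
      case 2 thus ?thesis using axis_span_a[OF sg e0 _ fe, of u] uw adjf tri by (metis insert_commute)
    next
      case 3
      have e0': "ends e0 = {b,a}" using e0 by (simp add: insert_commute)
      have "{cut_vector ends S | S. (b\<in>S) = (a\<in>S)} = ?T" by (simp add: eq_commute)
      thus ?thesis using 3 axis_span_a[OF sg e0' _ fe, of w] uw adjf tri adjs by metis
    next
      case 4
      have e0': "ends e0 = {b,a}" using e0 by (simp add: insert_commute)
      have "{cut_vector ends S | S. (b\<in>S) = (a\<in>S)} = ?T" by (simp add: eq_commute)
      thus ?thesis using 4 axis_span_a[OF sg e0' _ fe, of u] uw adjf tri adjs by (metis insert_commute)
    next
      case 5 thus ?thesis using axis_span_far[OF sg uw(2), of "\<lambda>S. (a\<in>S) = (b\<in>S)"] by auto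
    qed
  qed
  fix x :: "real^'e" assume "x \<in> {x. x $ e0 = 0}"
  hence x0: "x $ e0 = 0" by simp
  have eq: "x = (\<Sum>g\<in>UNIV - {e0}. x $ g *\<^sub>R axis g 1)" using expand_E[of x "{e0}"] x0 by simp
  have s: "(\<Sum>g\<in>UNIV - {e0}. x $ g *\<^sub>R axis g 1) \<in> span ?T" by (rule hyper_span) (rule ax)
  show "x \<in> span ?T" by (subst eq) (fact s)
qed



lemma axis_span_T:
  assumes sg: "simple_graph ends" and f: "ends f = {u,w}" and "u \<notin> T" "w \<notin> T"
    and "P (insert u T)" "P (insert w T)" "P (insert u (insert w T))" "P T"
  shows "axis f 1 \<in> span {cut_vector ends S | S. P S}"
proof -
  let ?T = "{cut_vector ends S | S. P S}"
  have "(1/2) *\<^sub>R (cut_vector ends (insert u T) + cut_vector ends (insert w T)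
     - cut_vector ends (insert u (insert w T)) - cut_vector ends T) \<in> span ?T"
    using assms by (intro span_scale span_add span_diff span_base) auto
  thus ?thesis using four_term[OF sg f assms(3,4)] by simp
qed

lemma E_part_span:
  fixes y :: "real^'e::finite"
  assumes "y \<in> span T" "\<And>g. g \<notin> E \<Longrightarrow> axis g 1 \<in> span T"
  shows "(\<Sum>g\<in>E. y $ g *\<^sub>R axis g 1) \<in> span T"
proof -
  have "(\<Sum>g\<in>E. y $ g *\<^sub>R axis g 1) = y - (\<Sum>g\<in>UNIV - E. y $ g *\<^sub>R axis g 1)"
    using expand_E[of y E] by (simp add: algebra_simps)
  thus ?thesis using assms hyper_span[of E T y] by (simp add: span_diff)
qed

lemma span_b:
  fixes ends :: "'e::finite \<Rightarrow> 'v::finite set"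
  assumes sg: "simple_graph ends" and dist: "distinct [a,b,c,d]"
    and e1: "ends e1 = {a,b}" and e2: "ends e2 = {b,c}" and e3: "ends e3 = {c,d}" and e4: "ends e4 = {d,a}"
    and nac: "\<not> adj ends a c" and nbd: "\<not> adj ends b d"
  shows "{x. x $ e1 - x $ e2 - x $ e3 - x $ e4 = 0} \<subseteq>
     span {cut_vector ends S | S. cut_vector ends S $ e1 - cut_vector ends S $ e2
                - cut_vector ends S $ e3 - cut_vector ends S $ e4 = 0}"
proof
  define P where "P S \<longleftrightarrow> cut_vector ends S $ e1 - cut_vector ends S $ e2
                - cut_vector ends S $ e3 - cut_vector ends S $ e4 = 0" for S
  let ?T = "{cut_vector ends S | S. P S}"
  have c1: "cut_vector ends S $ e1 = (if (a\<in>S) = (b\<in>S) then 0 else 1)" for S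
    using cv_pq[of ends e1 a b] e1 dist by auto
  have c2: "cut_vector ends S $ e2 = (if (b\<in>S) = (c\<in>S) then 0 else 1)" for S
    using cv_pq[of ends e2 b c] e2 dist by auto
  have c3: "cut_vector ends S $ e3 = (if (c\<in>S) = (d\<in>S) then 0 else 1)" for S
    using cv_pq[of ends e3 c d] e3 dist by auto
  have c4: "cut_vector ends S $ e4 = (if (d\<in>S) = (a\<in>S) then 0 else 1)" for S
    using cv_pq[of ends e4 d a] e4 dist by auto
  note cs = c1 c2 c3 c4
  have Pd: "P S \<longleftrightarrow> (if (a\<in>S) = (b\<in>S) then 0 else 1) - (if (b\<in>S) = (c\<in>S) then 0 else 1)
     - (if (c\<in>S) = (d\<in>S) then 0 else 1) - (if (d\<in>S) = (a\<in>S) then 0 else (1::real)) = 0" for S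
    unfolding P_def cs ..
  let ?E = "{e1,e2,e3,e4}"
  have ax: "axis f 1 \<in> span ?T" if "f \<notin> ?E" for f
  proof -
    obtain u w where uw: "u \<noteq> w" "ends f = {u,w}" using ends_pq[OF sg] by blast
    have gen: "axis f 1 \<in> span ?T" if f': "ends f = {u',w'}" and u': "u' \<in> {a,b,c,d}" and w': "w' \<notin> {a,b,c,d}" for u' w'
    proof -
      consider "u' = a" | "u' = b" | "u' = c" | "u' = d" using u' by blast
      then show ?thesis
      proof cases
        case 1 show ?thesis by (rule axis_span_T[OF sg f', of "{}"]) (use 1 w' dist in \<open>auto simp: Pd\<close>)
      next
        case 2 show ?thesis by (rule axis_span_T[OF sg f', of "{}"]) (use 2 w' dist in \<open>auto simp: Pd\<close>)
      next
        case 3 show ?thesis by (rule axis_span_T[OF sg f', of "{b}"]) (use 3 w' dist in \<open>auto simp: Pd\<close>)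
      next
        case 4 show ?thesis by (rule axis_span_T[OF sg f', of "{a}"]) (use 4 w' dist in \<open>auto simp: Pd\<close>)
      qed
    qed
    consider "u \<notin> {a,b,c,d}" "w \<notin> {a,b,c,d}" | "u \<in> {a,b,c,d}" "w \<notin> {a,b,c,d}"
      | "u \<notin> {a,b,c,d}" "w \<in> {a,b,c,d}" | "u \<in> {a,b,c,d}" "w \<in> {a,b,c,d}" by blast
    then show ?thesis
    proof cases
      case 1 show ?thesis by (rule axis_span_T[OF sg uw(2), of "{}"]) (use 1 in \<open>auto simp: Pd\<close>)
    next
      case 2 show ?thesis using gen[OF uw(2) 2] .
    next
      case 3 have fw: "ends f = {w,u}" using uw by (simp add: insert_commute)
      show ?thesis using gen[OF fw 3(2,1)] .
    next
      case 4
      have adj: "adj ends u w" "adj ends w u" using uw unfolding adj_def by (metis insert_commute rangeI)+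
      have ne: "ends f \<noteq> {a,b}" "ends f \<noteq> {b,c}" "ends f \<noteq> {c,d}" "ends f \<noteq> {d,a}"
        using \<open>f \<notin> ?E\<close> ends_eq[OF sg, of f] e1 e2 e3 e4 by auto
      show ?thesis using 4 uw adj ne nac nbd dist
        by (auto simp: doubleton_eq_iff insert_commute)
    qed
  qed
  have dE: "e1 \<noteq> e2" "e1 \<noteq> e3" "e1 \<noteq> e4" "e2 \<noteq> e3" "e2 \<noteq> e4" "e3 \<noteq> e4"
    using e1 e2 e3 e4 dist by (auto simp: doubleton_eq_iff)
  have sumE: "(\<Sum>g\<in>?E. y $ g *\<^sub>R axis g 1) = y $ e1 *\<^sub>R axis e1 1 + y $ e2 *\<^sub>R axis e2 1
      + y $ e3 *\<^sub>R axis e3 1 + y $ e4 *\<^sub>R axis e4 1" for y :: "real^'e"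
    using dE by (simp add: algebra_simps)
  have Eb: "(\<Sum>g\<in>?E. cut_vector ends S $ g *\<^sub>R axis g 1) \<in> span ?T" if "P S" for S
    by (rule E_part_span[OF _ ax]) (use that in \<open>auto intro: span_base\<close>)
  have v12: "axis e1 1 + axis e2 1 \<in> span ?T"
    proof -
    have p: "P {b}" using dist by (auto simp: Pd)
    moreover have q: "(\<Sum>g\<in>?E. cut_vector ends {b} $ g *\<^sub>R axis g 1) = axis e1 1 + axis e2 1"
      using dist unfolding sumE by (auto simp: cs)
    show ?thesis using Eb[OF p] unfolding q by blast
  qed
  have v14: "axis e1 1 + axis e4 1 \<in> span ?T"
    proof -
    have p: "P {a}" using dist by (auto simp: Pd)
    moreover have q: "(\<Sum>g\<in>?E. cut_vector ends {a} $ g *\<^sub>R axis g 1) = axis e1 1 + axis e4 1"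
      using dist unfolding sumE by (auto simp: cs)
    show ?thesis using Eb[OF p] unfolding q by blast
  qed
  have v13: "axis e1 1 + axis e3 1 \<in> span ?T"
    proof -
    have p: "P {a,d}" using dist by (auto simp: Pd)
    moreover have q: "(\<Sum>g\<in>?E. cut_vector ends {a,d} $ g *\<^sub>R axis g 1) = axis e1 1 + axis e3 1"
      using dist unfolding sumE by (auto simp: cs)
    show ?thesis using Eb[OF p] unfolding q by blast
  qed
  fix x :: "real^'e" assume "x \<in> {x. x $ e1 - x $ e2 - x $ e3 - x $ e4 = 0}"
  hence x1: "x $ e1 = x $ e2 + x $ e3 + x $ e4" by simp
  have "(\<Sum>g\<in>?E. x $ g *\<^sub>R axis g 1) = x $ e2 *\<^sub>R (axis e1 1 + axis e2 1)
     + x $ e3 *\<^sub>R (axis e1 1 + axis e3 1) + x $ e4 *\<^sub>R (axis e1 1 + axis e4 1)"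
    unfolding sumE x1 by (simp add: algebra_simps)
  also have "\<dots> \<in> span ?T" by (rule span_add[OF span_add[OF span_scale[OF v12] span_scale[OF v13]] span_scale[OF v14]])
  finally have sE: "(\<Sum>g\<in>?E. x $ g *\<^sub>R axis g 1) \<in> span ?T" .
  have s: "(\<Sum>g\<in>UNIV - ?E. x $ g *\<^sub>R axis g 1) \<in> span ?T" by (rule hyper_span) (rule ax)
  have "x \<in> span ?T" by (subst expand_E[of x ?E]) (rule span_add[OF s sE])
  thus "x \<in> span {cut_vector ends S | S. cut_vector ends S $ e1 - cut_vector ends S $ e2
                - cut_vector ends S $ e3 - cut_vector ends S $ e4 = 0}" unfolding P_def .
qed



lemma cvP: "cut_vector ends S \<in> cut_polytope ends"
  unfolding cut_polytope_def by (rule hull_inc) auto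

lemma count_main:
  fixes ends :: "'e::finite \<Rightarrow> 'v::finite set" and R :: "'k \<Rightarrow> 'v set"
  assumes sg: "simple_graph ends"
    and F0: "(cut_polytope ends \<inter> {x. h \<bullet> x = 0}) facet_of cut_polytope ends"
    and finC: "finite C" and Ccv: "\<forall>x\<in>C. \<exists>S. x = cut_vector ends S"
    and cnt: "\<forall>F. F facet_of cut_polytope ends \<longrightarrow> int (card (C \<inter> F)) = d"
    and finK: "finite K"
    and m: "\<And>S. (\<Sum>k\<in>K. of_bool (h \<bullet> cut_vector ends ((S - R k) \<union> (R k - S)) = 0) :: int) = m"
  shows "int (card K) * d = m * int (card C)"
proof -
  let ?F0 = "cut_polytope ends \<inter> {x. h \<bullet> x = 0}"
  define F where "F k = sw ends (R k) ` ?F0" for k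
  have Fk: "int (card (C \<inter> F k)) = d" for k
    using cnt sw_facet[OF sg F0] unfolding F_def by blast
  have mem: "(c \<in> F k) = (h \<bullet> cut_vector ends ((S - R k) \<union> (R k - S)) = 0)" if "c = cut_vector ends S" for c S k
    unfolding F_def sw_mem that sw_cv[OF sg] using cvP by blast
  have "int (card K) * d = (\<Sum>k\<in>K. int (card (C \<inter> F k)))" using Fk by simp
  also have "\<dots> = (\<Sum>k\<in>K. \<Sum>c\<in>C. of_bool (c \<in> F k))"
    using finC by (simp add: Int_def)
  also have "\<dots> = (\<Sum>c\<in>C. \<Sum>k\<in>K. of_bool (c \<in> F k))" by (rule sum.swap)
  also have "\<dots> = (\<Sum>c\<in>C. m)"
  proof (rule sum.cong[OF refl])
    fix c assume "c \<in> C"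
    then obtain S where S: "c = cut_vector ends S" using Ccv by blast
    show "(\<Sum>k\<in>K. of_bool (c \<in> F k)) = m" unfolding mem[OF S] by (rule m)
  qed
  also have "\<dots> = m * int (card C)" by simp
  finally show ?thesis .
qed



lemma inner_axis_real: "axis e (1::real) \<bullet> (x::real^'e::finite) = x $ e"
  by (simp add: inner_axis')

theorem lemma3p2:
  fixes ends :: "'e::finite \<Rightarrow> 'v::finite set"
    and \<Sigma> :: "(real ^ 'e) set" and d :: int
  assumes "simple_graph ends"
    and "compressed (cut_polytope ends)"
    and "special_simplex (cut_polytope ends) d \<Sigma>"
    and "edge_in_no_triangle ends \<or> has_induced_4cycle ends"
  shows "d = 1"
proof -
  note sg = assms(1)
  let ?P = "cut_polytope ends"
  obtain C where C: "\<not> affine_dependent C" "int (card C) = d + 1" "\<Sigma> = convex hull C"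
    using assms(3) unfolding special_simplex_def simplex_def by blast
  have extC: "{v. v extreme_point_of \<Sigma>} = C"
    using extreme_point_of_convex_hull_affine_independent[OF C(1)] C(3) by blast
  have finC: "finite C" using aff_independent_finite[OF C(1)] .
  have Ccv: "\<forall>x\<in>C. \<exists>S. x = cut_vector ends S"
  proof
    fix x assume "x \<in> C"
    hence "x extreme_point_of ?P" using assms(3) extC unfolding special_simplex_def by blast
    hence "x \<in> range (cut_vector ends)" unfolding cut_polytope_def by (rule extreme_point_of_convex_hull)
    thus "\<exists>S. x = cut_vector ends S" by blast
  qed
  have cnt: "\<forall>F. F facet_of ?P \<longrightarrow> int (card (C \<inter> F)) = d"
    using assms(3) extC unfolding special_simplex_def by simp
  from assms(4) show ?thesis
  proof
    assume "edge_in_no_triangle ends"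
    then obtain a b where ab: "adj ends a b" and tri: "\<not> (\<exists>c. adj ends a c \<and> adj ends b c)"
      unfolding edge_in_no_triangle_def by blast
    then obtain e0 where e0: "ends e0 = {a,b}" unfolding adj_def by (metis rangeE)
    have anb: "a \<noteq> b" using card2_neq[OF sg e0] .
    let ?h = "- axis e0 (1::real) :: real^'e"
    have hx: "?h \<bullet> x = - x $ e0" for x by (simp add: inner_axis_real)
    have ce: "cut_vector ends S $ e0 = (if (a\<in>S) = (b\<in>S) then 0 else 1)" for S
      using cv_pq[of ends e0 a b] e0 anb by auto
    have F0: "(?P \<inter> {x. ?h \<bullet> x = 0}) facet_of ?P"
    proof (rule base_facet)
      show "?h \<noteq> 0" by (metis axis_nth minus_zero zero_index zero_neq_one neg_equal_0_iff_equal vector_uminus_component)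
      show "?h \<bullet> cut_vector ends S \<le> 0" for S unfolding hx by (simp add: ce)
      have "{x. ?h \<bullet> x = 0} = {x. x $ e0 = 0}" unfolding hx by simp
      moreover have "{cut_vector ends S |S. ?h \<bullet> cut_vector ends S = 0} = {cut_vector ends S |S. (a\<in>S) = (b\<in>S)}"
        unfolding hx ce by (auto split: if_splits)
      ultimately show "{x. ?h \<bullet> x = 0} \<subseteq> span {cut_vector ends S |S. ?h \<bullet> cut_vector ends S = 0}"
        using span_a[OF sg e0 tri] by simp
      show "?h \<bullet> cut_vector ends {a} < 0" unfolding hx using anb by (simp add: ce)
    qed
    have "int (card {False, True}) * d = 1 * int (card C)"
    proof (rule count_main[OF sg F0 finC Ccv cnt, where R = "\<lambda>k. if k then {a} else {}"])
      show "finite {False, True}" by simp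
      fix S
      show "(\<Sum>k\<in>{False, True}. of_bool (?h \<bullet> cut_vector ends
         ((S - (if k then {a} else {})) \<union> ((if k then {a} else {}) - S)) = 0) :: int) = 1"
        unfolding hx using anb by (cases "a \<in> S"; cases "b \<in> S") (auto simp: ce)
    qed
    thus ?thesis using C(2) by simp
  next
    assume "has_induced_4cycle ends"
    then obtain a b c d' where dist: "distinct [a,b,c,d']" and ab: "adj ends a b" and bc: "adj ends b c"
      and cd: "adj ends c d'" and da: "adj ends d' a" and nac: "\<not> adj ends a c" and nbd: "\<not> adj ends b d'"
      unfolding has_induced_4cycle_def by blast
    obtain e1 where e1: "ends e1 = {a,b}" using ab unfolding adj_def by (metis rangeE)
    obtain e2 where e2: "ends e2 = {b,c}" using bc unfolding adj_def by (metis rangeE)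
    obtain e3 where e3: "ends e3 = {c,d'}" using cd unfolding adj_def by (metis rangeE)
    obtain e4 where e4: "ends e4 = {d',a}" using da unfolding adj_def by (metis rangeE)
    have dE: "e1 \<noteq> e2" "e1 \<noteq> e3" "e1 \<noteq> e4" "e2 \<noteq> e3" "e2 \<noteq> e4" "e3 \<noteq> e4"
      using e1 e2 e3 e4 dist by (auto simp: doubleton_eq_iff)
    let ?h = "axis e1 1 - axis e2 1 - axis e3 1 - axis e4 (1::real) :: real^'e"
    have hx: "?h \<bullet> x = x $ e1 - x $ e2 - x $ e3 - x $ e4" for x
      by (simp add: inner_diff_left inner_axis_real)
    have c1: "cut_vector ends S $ e1 = (if (a\<in>S) = (b\<in>S) then 0 else 1)" for S
      using cv_pq[of ends e1 a b] e1 dist by auto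
    have c2: "cut_vector ends S $ e2 = (if (b\<in>S) = (c\<in>S) then 0 else 1)" for S
      using cv_pq[of ends e2 b c] e2 dist by auto
    have c3: "cut_vector ends S $ e3 = (if (c\<in>S) = (d'\<in>S) then 0 else 1)" for S
      using cv_pq[of ends e3 c d'] e3 dist by auto
    have c4: "cut_vector ends S $ e4 = (if (d'\<in>S) = (a\<in>S) then 0 else 1)" for S
      using cv_pq[of ends e4 d' a] e4 dist by auto
    note cs = c1 c2 c3 c4
    have F0: "(?P \<inter> {x. ?h \<bullet> x = 0}) facet_of ?P"
    proof (rule base_facet)
      have "?h $ e1 = 1" using dE by (simp add: axis_nth)
      thus "?h \<noteq> 0" by (metis zero_index zero_neq_one)
      show "?h \<bullet> cut_vector ends S \<le> 0" for S
        by (cases "a \<in> S"; cases "b \<in> S"; cases "c \<in> S"; cases "d' \<in> S") (simp_all add: hx cs)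
      show "{x. ?h \<bullet> x = 0} \<subseteq> span {cut_vector ends S |S. ?h \<bullet> cut_vector ends S = 0}"
        unfolding hx using span_b[OF sg dist e1 e2 e3 e4 nac nbd] .
      show "?h \<bullet> cut_vector ends {c} < 0" using dist by (auto simp: hx cs)
    qed
    define K where "K = {(False,False,False),(False,False,True),(False,True,False),(False,True,True),
       (True,False,False),(True,False,True),(True,True,False),(True,True,True)}"
    define R where "R = (\<lambda>(x,y,z). {v. (v = a \<and> x) \<or> (v = b \<and> y) \<or> (v = c \<and> z)})"
    define tq :: "bool \<Rightarrow> bool \<Rightarrow> bool \<Rightarrow> bool \<Rightarrow> bool" where "tq p q r s \<longleftrightarrow> (of_bool (p \<noteq> q) :: real) = of_bool (q \<noteq> r) + of_bool (r \<noteq> s) + of_bool (s \<noteq> p)" for p q r s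
    have key: "(?h \<bullet> cut_vector ends X = 0) = tq (a\<in>X) (b\<in>X) (c\<in>X) (d'\<in>X)" for X
      unfolding hx cs tq_def by auto
    have boolsum: "(\<Sum>k\<in>K. of_bool (tq (A \<noteq> fst k) (B \<noteq> fst (snd k)) (C' \<noteq> snd (snd k)) D) :: int) = 4" for A B C' D
      by (cases A; cases B; cases C'; cases D) (simp_all add: K_def tq_def)
    have memR: "(v \<in> (S - R k) \<union> (R k - S)) = ((v \<in> S) \<noteq> (v \<in> R k))" for v S k by blast
    have Ra: "(a \<in> R k) = fst k" "(b \<in> R k) = fst (snd k)" "(c \<in> R k) = snd (snd k)" "(d' \<in> R k) = False" for k
      using dist unfolding R_def by (auto split: prod.splits)
    have "int (card K) * d = 4 * int (card C)"
    proof (rule count_main[OF sg F0 finC Ccv cnt, where R = R])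
      show "finite K" by (simp add: K_def)
      fix S
      show "(\<Sum>k\<in>K. of_bool (?h \<bullet> cut_vector ends ((S - R k) \<union> (R k - S)) = 0) :: int) = 4"
        unfolding key memR Ra using boolsum[of "a\<in>S" "b\<in>S" "c\<in>S" "d'\<in>S"] by simp
    qed
    moreover have "card K = 8" by (simp add: K_def)
    ultimately show ?thesis using C(2) by simp
  qed
qed


end
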